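(* Let $R$ be an irreducible root system spanning a rational vector space $L$, with Weyl group $W(R)$. Then ${\rm rk}(R)+1\leqslant{\rm sep}(R)\leqslant|W(R)|$.
   Context: For $l\in L^*$ put $l^+=\{x\in L\mid l(x)\geqslant0\}$ and $l^0=\{x\in L\mid l(x)=0\}$. The separation index ${\rm sep}(R)$ is the minimal length $n$ of a sequence $C_1,\ldots,C_n$ of Weyl chambers of $R$ such that for every nonzero $l\in L^*$ there is $i\in[1,n]$ with $\overline{C_i}\subset l^+$ and $\overline{C_i}\cap l^0=\{0\}$ (closures taken in $L$). *)

theory Defs
  imports "HOL-Analysis.Analysis"
begin

text \<open>The rational vector space L is modelled as rat^'n (every finite-dimensional
  Q-vector space is isomorphic to one of these; the dimension is CARD('n)).
  Linear forms on rat^'n are represented by vectors via the standard pairing qdot.\<close>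

definition qdot :: "rat ^ 'n \<Rightarrow> rat ^ 'n \<Rightarrow> rat" where
  "qdot x y = (\<Sum>i\<in>UNIV. x $ i * y $ i)"

definition qrefl :: "(rat ^ 'n \<Rightarrow> rat ^ 'n) \<Rightarrow> rat ^ 'n \<Rightarrow> rat ^ 'n \<Rightarrow> rat ^ 'n" where
  "qrefl cor \<alpha> x = x - qdot (cor \<alpha>) x *s \<alpha>"

definition root_system :: "(rat ^ 'n) set \<Rightarrow> (rat ^ 'n \<Rightarrow> rat ^ 'n) \<Rightarrow> bool" where
  "root_system R cor \<longleftrightarrow> finite R \<and> 0 \<notin> R \<and>
     (\<forall>x. \<exists>c. x = (\<Sum>\<alpha>\<in>R. c \<alpha> *s \<alpha>)) \<and>
     (\<forall>\<alpha>\<in>R. qdot (cor \<alpha>) \<alpha> = 2 \<and>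
        (\<forall>\<beta>\<in>R. qrefl cor \<alpha> \<beta> \<in> R \<and> qdot (cor \<alpha>) \<beta> \<in> \<int>))"

definition irreducible_rs :: "(rat ^ 'n) set \<Rightarrow> (rat ^ 'n \<Rightarrow> rat ^ 'n) \<Rightarrow> bool" where
  "irreducible_rs R cor \<longleftrightarrow> R \<noteq> {} \<and>
     \<not> (\<exists>R1 R2. R1 \<noteq> {} \<and> R2 \<noteq> {} \<and> R1 \<union> R2 = R \<and> R1 \<inter> R2 = {} \<and>
            (\<forall>\<alpha>\<in>R1. \<forall>\<beta>\<in>R2. qdot (cor \<alpha>) \<beta> = 0))"

inductive_set weyl_group :: "(rat ^ 'n) set \<Rightarrow> (rat ^ 'n \<Rightarrow> rat ^ 'n)
    \<Rightarrow> (rat ^ 'n \<Rightarrow> rat ^ 'n) set" for R cor where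
  id: "id \<in> weyl_group R cor"
| refl: "w \<in> weyl_group R cor \<Longrightarrow> \<alpha> \<in> R \<Longrightarrow> qrefl cor \<alpha> \<circ> w \<in> weyl_group R cor"

text \<open>Weyl chambers: the classes of regular points (off all reflecting hyperplanes)
  with a common sign pattern, i.e. the connected components of the complement of
  the hyperplanes (over the reals).\<close>
definition weyl_chamber :: "(rat ^ 'n) set \<Rightarrow> (rat ^ 'n \<Rightarrow> rat ^ 'n) \<Rightarrow> (rat ^ 'n) set \<Rightarrow> bool" where
  "weyl_chamber R cor C \<longleftrightarrow> (\<exists>x. (\<forall>\<alpha>\<in>R. qdot (cor \<alpha>) x \<noteq> 0) \<and>
      C = {y. \<forall>\<alpha>\<in>R. qdot (cor \<alpha>) y * qdot (cor \<alpha>) x > 0})"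

definition qclosure :: "(rat ^ 'n) set \<Rightarrow> (rat ^ 'n) set" where
  "qclosure S = {y. \<forall>e>0. \<exists>x\<in>S. \<forall>i. \<bar>y $ i - x $ i\<bar> < e}"

definition lplus :: "rat ^ 'n \<Rightarrow> (rat ^ 'n) set" where
  "lplus l = {x. qdot l x \<ge> 0}"

definition lzero :: "rat ^ 'n \<Rightarrow> (rat ^ 'n) set" where
  "lzero l = {x. qdot l x = 0}"

definition separating_seq :: "(rat ^ 'n) set \<Rightarrow> (rat ^ 'n \<Rightarrow> rat ^ 'n) \<Rightarrow> (rat ^ 'n) set list \<Rightarrow> bool" where
  "separating_seq R cor Cs \<longleftrightarrow> (\<forall>C\<in>set Cs. weyl_chamber R cor C) \<and>
     (\<forall>l. l \<noteq> 0 \<longrightarrow> (\<exists>C\<in>set Cs. qclosure C \<subseteq> lplus l \<and> qclosure C \<inter> lzero l = {0}))"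

definition sep :: "(rat ^ 'n) set \<Rightarrow> (rat ^ 'n \<Rightarrow> rat ^ 'n) \<Rightarrow> nat" where
  "sep R cor = (LEAST n. \<exists>Cs. length Cs = n \<and> separating_seq R cor Cs)"

text \<open>Rank of R = dimension of the spanned space L = CARD('n).\<close>

end

theory Submission
  imports Defs
begin


lemma qdot_commute: "qdot x y = qdot y x"
  unfolding qdot_def by (simp add: mult.commute)
lemma qdot_add_right: "qdot x (y + z) = qdot x y + qdot x z"
  unfolding qdot_def by (simp add: algebra_simps sum.distrib)
lemma qdot_add_left: "qdot (y + z) x = qdot y x + qdot z x"
  unfolding qdot_def by (simp add: algebra_simps sum.distrib)
lemma qdot_diff_right: "qdot x (y - z) = qdot x y - qdot x z"
  unfolding qdot_def by (simp add: algebra_simps sum_subtractf)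
lemma qdot_diff_left: "qdot (y - z) x = qdot y x - qdot z x"
  unfolding qdot_def by (simp add: algebra_simps sum_subtractf)
lemma qdot_scale_right: "qdot x (c *s y) = c * qdot x y"
  unfolding qdot_def by (simp add: algebra_simps sum_distrib_left)
lemma qdot_scale_left: "qdot (c *s y) x = c * qdot y x"
  unfolding qdot_def by (simp add: algebra_simps sum_distrib_left)
lemma qdot_minus_right: "qdot x (- y) = - qdot x y"
  unfolding qdot_def by (simp add: sum_negf)
lemma qdot_minus_left: "qdot (- y) x = - qdot y x"
  unfolding qdot_def by (simp add: sum_negf)
lemma qdot_zero_right[simp]: "qdot x 0 = 0"
  unfolding qdot_def by simp
lemma qdot_zero_left[simp]: "qdot 0 x = 0"
  unfolding qdot_def by simp
lemma qdot_sum_right: "qdot x (sum f A) = (\<Sum>a\<in>A. qdot x (f a))"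
  unfolding qdot_def by (simp add: sum_distrib_left sum.swap[of _ UNIV A])
lemma qdot_self_nonneg: "qdot x x \<ge> 0"
  unfolding qdot_def by (simp add: sum_nonneg)
lemma qdot_self_eq_0: "qdot x x = 0 \<longleftrightarrow> x = 0"
proof
  assume "qdot x x = 0"
  then have "\<forall>i\<in>UNIV. x $ i * x $ i = 0"
    unfolding qdot_def by (subst sum_nonneg_eq_0_iff[symmetric]) auto
  then show "x = 0" by (simp add: vec_eq_iff)
qed simp
lemma qdot_self_pos: "x \<noteq> 0 \<Longrightarrow> qdot x x > 0"
  using qdot_self_nonneg[of x] qdot_self_eq_0[of x] by linarith



locale rsys =
  fixes R :: "(rat ^ 'n) set" and cor :: "rat ^ 'n \<Rightarrow> rat ^ 'n"
  assumes rs: "root_system R cor"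
begin

abbreviation "W \<equiv> weyl_group R cor"

lemma finR: "finite R" using rs unfolding root_system_def by blast
lemma zero_notin: "0 \<notin> R" using rs unfolding root_system_def by blast
lemma spanR: "\<exists>c. x = (\<Sum>\<alpha>\<in>R. c \<alpha> *s \<alpha>)" using rs unfolding root_system_def by blast
lemma cor2: "\<alpha> \<in> R \<Longrightarrow> qdot (cor \<alpha>) \<alpha> = 2" using rs unfolding root_system_def by blast
lemma reflR: "\<alpha> \<in> R \<Longrightarrow> \<beta> \<in> R \<Longrightarrow> qrefl cor \<alpha> \<beta> \<in> R" using rs unfolding root_system_def by blast

lemma s_add: "qrefl cor \<alpha> (x + y) = qrefl cor \<alpha> x + qrefl cor \<alpha> y"
  unfolding qrefl_def by (simp add: qdot_add_right vector_sadd_rdistrib)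
lemma s_scale: "qrefl cor \<alpha> (c *s x) = c *s qrefl cor \<alpha> x"
  unfolding qrefl_def by (simp add: qdot_scale_right vector_ssub_ldistrib vector_smult_assoc)

lemma s_invol: "\<alpha> \<in> R \<Longrightarrow> qrefl cor \<alpha> (qrefl cor \<alpha> x) = x"
  unfolding qrefl_def using cor2[of \<alpha>]
  by (simp add: qdot_diff_right qdot_scale_right vector_ssub_ldistrib vector_smult_assoc
      algebra_simps flip: vector_sadd_rdistrib)

lemma s_self: "\<alpha> \<in> R \<Longrightarrow> qrefl cor \<alpha> \<alpha> = - \<alpha>"
  unfolding qrefl_def using cor2[of \<alpha>] by (simp add: vec_eq_iff)

lemma neg_R: "\<alpha> \<in> R \<Longrightarrow> - \<alpha> \<in> R"
  using reflR[of \<alpha> \<alpha>] s_self by simp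

lemma s_bij: "\<alpha> \<in> R \<Longrightarrow> bij (qrefl cor \<alpha>)"
  by (metis bijI' s_invol)

lemma s_W: "\<alpha> \<in> R \<Longrightarrow> qrefl cor \<alpha> \<in> W"
  using weyl_group.refl[OF weyl_group.id, of \<alpha> R cor] by simp

lemma W_add: "w \<in> W \<Longrightarrow> w (x + y) = w x + w y"
  by (induction w rule: weyl_group.induct) (auto simp: s_add)
lemma W_scale: "w \<in> W \<Longrightarrow> w (c *s x) = c *s w x"
  by (induction w rule: weyl_group.induct) (auto simp: s_scale)
lemma W_zero: "w \<in> W \<Longrightarrow> w 0 = 0"
  using W_scale[of w 0 0] by simp
lemma W_minus: "w \<in> W \<Longrightarrow> w (- x) = - w x"
  using W_scale[of w "-1" x] by (simp flip: vector_sneg_minus1)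
lemma W_diff: "w \<in> W \<Longrightarrow> w (x - y) = w x - w y"
  using W_add[of w x "-y"] W_minus[of w y] by simp
lemma W_sum: "w \<in> W \<Longrightarrow> w (sum f A) = (\<Sum>a\<in>A. w (f a))"
  by (induction A rule: infinite_finite_induct) (auto simp: W_zero W_add)
lemma W_R: "w \<in> W \<Longrightarrow> \<alpha> \<in> R \<Longrightarrow> w \<alpha> \<in> R"
  by (induction w rule: weyl_group.induct) (auto simp: reflR)
lemma W_bij: "w \<in> W \<Longrightarrow> bij w"
proof (induction w rule: weyl_group.induct)
  case id then show ?case by (rule bij_id)
next
  case (refl w \<alpha>) then show ?case using bij_comp[OF refl.IH s_bij[OF refl.hyps(2)]] by blast
qed
lemma W_comp: "w1 \<in> W \<Longrightarrow> w2 \<in> W \<Longrightarrow> w1 \<circ> w2 \<in> W"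
proof (induction w1 rule: weyl_group.induct)
  case id then show ?case by simp
next
  case (refl w \<alpha>)
  then have "qrefl cor \<alpha> \<circ> (w \<circ> w2) \<in> W" using weyl_group.refl[of "w \<circ> w2" R cor \<alpha>] by blast
  then show ?case by (simp only: comp_assoc)
qed
lemma W_perm: "w \<in> W \<Longrightarrow> w ` R = R"
  using endo_inj_surj[OF finR, of w] W_R W_bij bij_is_inj
  by (metis image_subsetI inj_on_subset subset_UNIV)

lemma W_finite: "finite W"
proof -
  have "inj_on (\<lambda>w. restrict w R) W"
  proof
    fix w1 w2 assume w: "w1 \<in> W" "w2 \<in> W" "restrict w1 R = restrict w2 R"
    show "w1 = w2"
    proof
      fix x
      obtain c where x: "x = (\<Sum>\<alpha>\<in>R. c \<alpha> *s \<alpha>)" using spanR by blast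
      have eq: "\<alpha> \<in> R \<Longrightarrow> w1 \<alpha> = w2 \<alpha>" for \<alpha> using w(3) by (metis restrict_apply')
      show "w1 x = w2 x" unfolding x using w eq by (simp add: W_sum W_scale)
    qed
  qed
  moreover have "(\<lambda>w. restrict w R) ` W \<subseteq> R \<rightarrow>\<^sub>E R" using W_R by auto
  moreover have "finite (R \<rightarrow>\<^sub>E R)" using finR by (simp add: finite_PiE)
  ultimately show ?thesis by (meson finite_imageD finite_subset)
qed

end


context rsys begin

definition bf :: "rat^'n \<Rightarrow> rat^'n \<Rightarrow> rat" where
  "bf x y = (\<Sum>w\<in>W. qdot (w x) (w y))"

lemma bf_commute: "bf x y = bf y x"
  unfolding bf_def by (simp add: qdot_commute)
lemma bf_add_left: "bf (x + y) z = bf x z + bf y z"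
  unfolding bf_def by (simp add: W_add qdot_add_left sum.distrib cong: sum.cong)
lemma bf_add_right: "bf z (x + y) = bf z x + bf z y"
  unfolding bf_def by (simp add: W_add qdot_add_right sum.distrib cong: sum.cong)
lemma bf_scale_left: "bf (c *s x) z = c * bf x z"
  unfolding bf_def by (simp add: W_scale qdot_scale_left sum_distrib_left cong: sum.cong)
lemma bf_scale_right: "bf z (c *s x) = c * bf z x"
  unfolding bf_def by (simp add: W_scale qdot_scale_right sum_distrib_left cong: sum.cong)
lemma bf_zero_left[simp]: "bf 0 z = 0"
  using bf_scale_left[of 0 0 z] by simp
lemma bf_zero_right[simp]: "bf z 0 = 0"
  using bf_scale_right[of z 0 0] by simp
lemma bf_minus_left: "bf (- x) z = - bf x z"
  using bf_scale_left[of "-1" x z] by (simp flip: vector_sneg_minus1)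
lemma bf_minus_right: "bf z (- x) = - bf z x"
  using bf_scale_right[of z "-1" x] by (simp flip: vector_sneg_minus1)
lemma bf_diff_left: "bf (x - y) z = bf x z - bf y z"
  using bf_add_left[of x "-y" z] bf_minus_left by simp
lemma bf_diff_right: "bf z (x - y) = bf z x - bf z y"
  using bf_add_right[of z x "-y"] bf_minus_right by simp
lemma bf_sum_left: "bf (sum f A) z = (\<Sum>a\<in>A. bf (f a) z)"
  by (induction A rule: infinite_finite_induct) (auto simp: bf_add_left)
lemma bf_sum_right: "bf z (sum f A) = (\<Sum>a\<in>A. bf z (f a))"
  by (induction A rule: infinite_finite_induct) (auto simp: bf_add_right)
lemma bf_pos: "x \<noteq> 0 \<Longrightarrow> bf x x > 0"
  unfolding bf_def
  by (rule sum_pos2[OF W_finite weyl_group.id]) (auto simp: qdot_self_pos qdot_self_nonneg)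
lemma bf_self_nonneg: "bf x x \<ge> 0"
  using bf_pos[of x] by (cases "x = 0") auto
lemma bf_self_eq_0: "bf x x = 0 \<longleftrightarrow> x = 0"
  using bf_pos[of x] by (cases "x = 0") auto

lemma bf_inv: assumes u: "u \<in> W" shows "bf (u x) (u y) = bf x y"
proof -
  have inj: "inj_on (\<lambda>w. w \<circ> u) W"
  proof
    fix w1 w2 assume "w1 \<circ> u = w2 \<circ> u"
    then have e: "w1 (u y) = w2 (u y)" for y by (metis comp_apply)
    show "w1 = w2"
    proof
      fix x
      obtain y where "x = u y" using W_bij[OF u] by (metis bij_pointE)
      then show "w1 x = w2 x" using e by simp
    qed
  qed
  have img: "(\<lambda>w. w \<circ> u) ` W = W"
    by (rule endo_inj_surj[OF W_finite _ inj]) (auto intro: W_comp u)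
  have "bf (u x) (u y) = (\<Sum>w\<in>W. (\<lambda>w. qdot (w x) (w y)) (w \<circ> u))"
    unfolding bf_def by simp
  also have "\<dots> = (\<Sum>w\<in>(\<lambda>w. w \<circ> u) ` W. qdot (w x) (w y))"
    by (simp add: sum.reindex[OF inj])
  also have "\<dots> = bf x y" unfolding img bf_def ..
  finally show ?thesis .
qed

lemma cor_bf: assumes a: "\<alpha> \<in> R" shows "qdot (cor \<alpha>) x * bf \<alpha> \<alpha> = 2 * bf \<alpha> x"
proof -
  have "bf (qrefl cor \<alpha> x) (qrefl cor \<alpha> \<alpha>) = bf x \<alpha>" by (rule bf_inv[OF s_W[OF a]])
  then have "bf (x - qdot (cor \<alpha>) x *s \<alpha>) (- \<alpha>) = bf x \<alpha>"
    using s_self[OF a] unfolding qrefl_def by simp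
  then show ?thesis by (simp add: bf_minus_right bf_diff_left bf_scale_left bf_commute[of x])
qed

lemma bf_root_pos: "\<alpha> \<in> R \<Longrightarrow> bf \<alpha> \<alpha> > 0"
proof -
  assume "\<alpha> \<in> R" then have "\<alpha> \<noteq> 0" using zero_notin by auto
  then show ?thesis by (rule bf_pos)
qed

lemma cor_sign_pos: assumes a: "\<alpha> \<in> R" shows "qdot (cor \<alpha>) x > 0 \<longleftrightarrow> bf \<alpha> x > 0"
proof -
  have p: "bf \<alpha> \<alpha> > 0" using bf_root_pos[OF a] .
  have "(qdot (cor \<alpha>) x > 0) = (qdot (cor \<alpha>) x * bf \<alpha> \<alpha> > 0)" using p by (simp add: zero_less_mult_iff)
  then show ?thesis using cor_bf[OF a, of x] by simp
qed
lemma cor_sign_nonneg: assumes a: "\<alpha> \<in> R" shows "qdot (cor \<alpha>) x \<ge> 0 \<longleftrightarrow> bf \<alpha> x \<ge> 0"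
proof -
  have p: "bf \<alpha> \<alpha> > 0" using bf_root_pos[OF a] .
  have "(qdot (cor \<alpha>) x \<ge> 0) = (qdot (cor \<alpha>) x * bf \<alpha> \<alpha> \<ge> 0)" using p by (simp add: zero_le_mult_iff)
  then show ?thesis using cor_bf[OF a, of x] by simp
qed
lemma cor_zero: "\<alpha> \<in> R \<Longrightarrow> qdot (cor \<alpha>) x = 0 \<longleftrightarrow> bf \<alpha> x = 0"
  using cor_bf[of \<alpha> x] bf_root_pos[of \<alpha>] by auto

end

lemma ex_nonorth:
  fixes F :: "(rat^'n) set"
  assumes "finite F" "0 \<notin> F"
  shows "\<exists>x. \<forall>f\<in>F. qdot f x \<noteq> 0"
  using assms
proof (induction F rule: finite_induct)
  case empty then show ?case by simp
next
  case (insert g F)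
  then obtain x where x: "\<forall>f\<in>F. qdot f x \<noteq> 0" by auto
  have g: "g \<noteq> 0" using insert by auto
  show ?case
  proof (cases "qdot g x = 0")
    case False then show ?thesis using x by auto
  next
    case True
    let ?T = "insert 0 ((\<lambda>f. - qdot f x / qdot f g) ` F)"
    have "finite ?T" using insert by simp
    then obtain t where t: "t \<notin> ?T" using ex_new_if_finite[OF infinite_UNIV_char_0] by blast
    have "\<forall>f\<in>insert g F. qdot f (x + t *s g) \<noteq> 0"
    proof
      fix f assume f: "f \<in> insert g F"
      show "qdot f (x + t *s g) \<noteq> 0"
      proof (cases "f = g")
        case True
        then show ?thesis using \<open>qdot g x = 0\<close> t qdot_self_pos[OF g]
          by (simp add: qdot_add_right qdot_scale_right)
      next
        case False
        then have fF: "f \<in> F" using f by auto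
        show ?thesis
        proof (cases "qdot f g = 0")
          case True then show ?thesis using x fF by (simp add: qdot_add_right qdot_scale_right)
        next
          case False
          have "t \<noteq> - qdot f x / qdot f g" using t fF by auto
          then show ?thesis using False by (simp add: qdot_add_right qdot_scale_right field_simps)
        qed
      qed
    qed
    then show ?thesis by blast
  qed
qed

context rsys begin
lemma ex_regular: "\<exists>x. \<forall>\<alpha>\<in>R. bf \<alpha> x \<noteq> 0"
proof -
  have "0 \<notin> cor ` R" using cor2 by force
  then obtain x where "\<forall>f\<in>cor ` R. qdot f x \<noteq> 0" using ex_nonorth[of "cor ` R"] finR by auto
  then show ?thesis using cor_zero by auto
qed
end


lemma smult_sum: "(c::rat) *s sum (f::_\<Rightarrow>rat^'n) A = (\<Sum>x\<in>A. c *s f x)"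
  by (induction A rule: infinite_finite_induct) (auto simp: vector_add_ldistrib)

lemma sum_single: "finite A \<Longrightarrow> a \<in> A \<Longrightarrow> (\<Sum>x\<in>A. (if x = a then c else 0) *s x) = c *s (a::rat^'n)"
proof -
  assume "finite A" "a \<in> A"
  have "(\<Sum>x\<in>A. (if x = a then c else 0) *s x) = (\<Sum>x\<in>A. if x = a then c *s x else 0)"
    by (rule sum.cong) auto
  also have "\<dots> = c *s a" using \<open>finite A\<close> \<open>a \<in> A\<close> by (simp add: sum.delta')
  finally show ?thesis .
qed

lemma sum_add_single: "finite A \<Longrightarrow> a \<in> A \<Longrightarrow>
   (\<Sum>x\<in>A. (k x + (if x = a then c else 0)) *s x) = (\<Sum>x\<in>A. k x *s x) + c *s (a::rat^'n)"
  by (simp add: vector_sadd_rdistrib sum.distrib sum_single)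

lemma aux1: "(d::rat^'n) - c *s g = k *s d + S \<Longrightarrow> (1 - k) *s d = S + c *s g"
  by (simp add: vec_eq_iff algebra_simps)
lemma aux2: "c *s g - (d::rat^'n) = k *s g + S \<Longrightarrow> (c - k) *s g = S + 1 *s d"
  by (simp add: vec_eq_iff algebra_simps)

definition spanX :: "(rat^'n) set \<Rightarrow> rat^'n \<Rightarrow> bool" where
  "spanX X v \<longleftrightarrow> (\<exists>c. v = (\<Sum>\<gamma>\<in>X. c \<gamma> *s \<gamma>))"

lemma spanX_add: "spanX X u \<Longrightarrow> spanX X v \<Longrightarrow> spanX X (u + v)"
  unfolding spanX_def
proof (elim exE)
  fix c d assume "u = (\<Sum>\<gamma>\<in>X. c \<gamma> *s \<gamma>)" "v = (\<Sum>\<gamma>\<in>X. d \<gamma> *s \<gamma>)"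
  then have "u + v = (\<Sum>\<gamma>\<in>X. (c \<gamma> + d \<gamma>) *s \<gamma>)" by (simp add: vector_sadd_rdistrib sum.distrib)
  then show "\<exists>c. u + v = (\<Sum>\<gamma>\<in>X. c \<gamma> *s \<gamma>)" by (rule exI[of _ "\<lambda>\<gamma>. c \<gamma> + d \<gamma>"])
qed
lemma spanX_scale: "spanX X u \<Longrightarrow> spanX X (t *s u)"
  unfolding spanX_def
proof (elim exE)
  fix c assume "u = (\<Sum>\<gamma>\<in>X. c \<gamma> *s \<gamma>)"
  then have "t *s u = (\<Sum>\<gamma>\<in>X. (t * c \<gamma>) *s \<gamma>)" by (simp add: smult_sum vector_smult_assoc)
  then show "\<exists>c. t *s u = (\<Sum>\<gamma>\<in>X. c \<gamma> *s \<gamma>)" by (rule exI[of _ "\<lambda>\<gamma>. t * c \<gamma>"])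
qed
lemma spanX_zero: "spanX X 0"
  unfolding spanX_def by (rule exI[of _ "\<lambda>_. 0"]) simp
lemma spanX_neg: "spanX X u \<Longrightarrow> spanX X (- u)"
  using spanX_scale[of X u "-1"] by (simp flip: vector_sneg_minus1)
lemma spanX_sum: "(\<And>a. a \<in> A \<Longrightarrow> spanX X (f a)) \<Longrightarrow> spanX X (sum f A)"
  by (induction A rule: infinite_finite_induct) (auto simp: spanX_zero spanX_add)
lemma spanX_elem: "finite X \<Longrightarrow> \<gamma> \<in> X \<Longrightarrow> spanX X \<gamma>"
  unfolding spanX_def using sum_single[of X \<gamma> 1] by (intro exI[of _ "\<lambda>x. if x = \<gamma> then 1 else 0"]) simp

locale posys = rsys R cor for R :: "(rat ^ 'n) set" and cor +
  fixes z :: "rat^'n"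
  assumes reg: "\<forall>\<alpha>\<in>R. bf \<alpha> z \<noteq> 0"
begin

definition "P = {\<alpha>\<in>R. bf \<alpha> z > 0}"
definition pcone where "pcone X v \<longleftrightarrow> (\<exists>k. (\<forall>\<gamma>\<in>X. k \<gamma> \<ge> 0) \<and> v = (\<Sum>\<gamma>\<in>X. k \<gamma> *s \<gamma>))"
definition good where "good X \<longleftrightarrow> X \<subseteq> P \<and> (\<forall>\<alpha>\<in>P. pcone X \<alpha>)"

lemma P_R: "P \<subseteq> R" unfolding P_def by auto
lemma finP: "finite P" using finite_subset[OF P_R finR] .
lemma R_cases: "\<alpha> \<in> R \<Longrightarrow> \<alpha> \<in> P \<or> - \<alpha> \<in> P"
  using reg neg_R[of \<alpha>] unfolding P_def by (auto simp: bf_minus_left)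

lemma good_P: "good P"
  unfolding good_def pcone_def
proof (intro conjI ballI subset_refl)
  fix \<alpha> assume "\<alpha> \<in> P"
  then show "\<exists>k. (\<forall>\<gamma>\<in>P. 0 \<le> k \<gamma>) \<and> \<alpha> = (\<Sum>\<gamma>\<in>P. k \<gamma> *s \<gamma>)"
    using sum_single[OF finP \<open>\<alpha> \<in> P\<close>, of 1]
    by (intro exI[of _ "\<lambda>x. if x = \<alpha> then 1 else 0"]) auto
qed

lemma ex_Del: "\<exists>D. good D \<and> (\<forall>D'. good D' \<longrightarrow> card D \<le> card D')"
  using ex_has_least_nat[of good P card] good_P by blast

definition Del where "Del = (SOME D. good D \<and> (\<forall>D'. good D' \<longrightarrow> card D \<le> card D'))"

lemma Del_both: "good Del \<and> (\<forall>D'. good D' \<longrightarrow> card Del \<le> card D')"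
  unfolding Del_def by (rule someI_ex[OF ex_Del])
lemma Del_good: "good Del" using Del_both by blast
lemma Del_min: "good D' \<Longrightarrow> card Del \<le> card D'" using Del_both by blast

lemma Del_P: "Del \<subseteq> P" using Del_good unfolding good_def by auto
lemma finDel: "finite Del" using finite_subset[OF Del_P finP] .
lemma Del_R: "\<gamma> \<in> Del \<Longrightarrow> \<gamma> \<in> R" using Del_P P_R by auto
lemma Del_pos: "\<gamma> \<in> Del \<Longrightarrow> bf \<gamma> z > 0" using Del_P unfolding P_def by auto
lemma P_cone: "\<alpha> \<in> P \<Longrightarrow> pcone Del \<alpha>" using Del_good unfolding good_def by auto

lemma Del_minimal: assumes d: "\<delta> \<in> Del" shows "\<not> pcone (Del - {\<delta>}) \<delta>"
proof
  assume "pcone (Del - {\<delta>}) \<delta>"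
  then obtain m where m: "\<forall>\<gamma>\<in>Del - {\<delta>}. m \<gamma> \<ge> 0" "\<delta> = (\<Sum>\<gamma>\<in>Del - {\<delta>}. m \<gamma> *s \<gamma>)"
    unfolding pcone_def by blast
  have "good (Del - {\<delta>})"
    unfolding good_def
  proof (intro conjI ballI)
    show "Del - {\<delta>} \<subseteq> P" using Del_P by auto
    fix \<alpha> assume "\<alpha> \<in> P"
    then obtain k where k: "\<forall>\<gamma>\<in>Del. k \<gamma> \<ge> 0" "\<alpha> = (\<Sum>\<gamma>\<in>Del. k \<gamma> *s \<gamma>)"
      using P_cone unfolding pcone_def by blast
    have "\<alpha> = k \<delta> *s \<delta> + (\<Sum>\<gamma>\<in>Del - {\<delta>}. k \<gamma> *s \<gamma>)"
      using k(2) sum.remove[OF finDel d] by simp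
    also have "k \<delta> *s \<delta> = k \<delta> *s (\<Sum>\<gamma>\<in>Del - {\<delta>}. m \<gamma> *s \<gamma>)"
      by (rule arg_cong[OF m(2)])
    also have "\<dots> = (\<Sum>\<gamma>\<in>Del - {\<delta>}. (k \<delta> * m \<gamma>) *s \<gamma>)"
      by (simp only: smult_sum vector_smult_assoc)
    also have "\<dots> + (\<Sum>\<gamma>\<in>Del - {\<delta>}. k \<gamma> *s \<gamma>) = (\<Sum>\<gamma>\<in>Del - {\<delta>}. (k \<gamma> + k \<delta> * m \<gamma>) *s \<gamma>)"
      by (simp add: vector_sadd_rdistrib sum.distrib add.commute)
    finally have "\<alpha> = (\<Sum>\<gamma>\<in>Del - {\<delta>}. (k \<gamma> + k \<delta> * m \<gamma>) *s \<gamma>)" .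
    moreover have "\<forall>\<gamma>\<in>Del - {\<delta>}. k \<gamma> + k \<delta> * m \<gamma> \<ge> 0" using k(1) m(1) d by auto
    ultimately show "pcone (Del - {\<delta>}) \<alpha>" unfolding pcone_def
      by (intro exI[of _ "\<lambda>\<gamma>. k \<gamma> + k \<delta> * m \<gamma>"]) blast
  qed
  then have "card Del \<le> card (Del - {\<delta>})" by (rule Del_min)
  moreover have "card (Del - {\<delta>}) < card Del" using card_Diff1_less[OF finDel d] .
  ultimately show False by simp
qed

lemma L_contra:
  assumes d: "\<delta> \<in> Del" and a: "\<forall>\<gamma>\<in>Del - {\<delta>}. a \<gamma> \<ge> 0" and g0: "\<gamma>0 \<in> Del - {\<delta>}" "a \<gamma>0 > 0"
    and eq: "p *s \<delta> = (\<Sum>\<gamma>\<in>Del - {\<delta>}. a \<gamma> *s \<gamma>)"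
  shows False
proof (cases "p > 0")
  case True
  have "\<delta> = (1 / p) *s (p *s \<delta>)" using True by (simp add: vector_smult_assoc)
  also have "\<dots> = (\<Sum>\<gamma>\<in>Del - {\<delta>}. (a \<gamma> / p) *s \<gamma>)"
    unfolding eq by (simp add: smult_sum vector_smult_assoc)
  finally have "pcone (Del - {\<delta>}) \<delta>" unfolding pcone_def using a True
    by (intro exI[of _ "\<lambda>\<gamma>. a \<gamma> / p"]) auto
  then show False using Del_minimal[OF d] by blast
next
  case False
  have "bf (p *s \<delta>) z = p * bf \<delta> z" by (simp add: bf_scale_left)
  also have "\<dots> \<le> 0" using False Del_pos[OF d] by (simp add: mult_nonpos_nonneg)
  finally have le: "bf (p *s \<delta>) z \<le> 0" .
  have "bf (\<Sum>\<gamma>\<in>Del - {\<delta>}. a \<gamma> *s \<gamma>) z = (\<Sum>\<gamma>\<in>Del - {\<delta>}. a \<gamma> * bf \<gamma> z)"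
    by (simp add: bf_sum_left bf_scale_left)
  also have "\<dots> > 0"
  proof (rule sum_pos2[of _ \<gamma>0])
    show "finite (Del - {\<delta>})" using finDel by simp
    show "\<gamma>0 \<in> Del - {\<delta>}" by (rule g0(1))
    show "0 < a \<gamma>0 * bf \<gamma>0 z" using g0 Del_pos by simp
    fix i assume i: "i \<in> Del - {\<delta>}"
    then have "0 \<le> a i" "0 < bf i z" using a Del_pos by auto
    then show "0 \<le> a i * bf i z" by simp
  qed
  finally show False using le eq by simp
qed

lemma obtuse: assumes g: "\<gamma> \<in> Del" and d: "\<delta> \<in> Del" and ne: "\<gamma> \<noteq> \<delta>" shows "bf \<gamma> \<delta> \<le> 0"
proof (rule ccontr)
  assume "\<not> bf \<gamma> \<delta> \<le> 0"
  then have "bf \<gamma> \<delta> > 0" by simp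
  define c where "c = qdot (cor \<gamma>) \<delta>"
  have c: "c > 0" unfolding c_def using cor_sign_pos[OF Del_R[OF g]] \<open>bf \<gamma> \<delta> > 0\<close> by simp
  define \<beta> where "\<beta> = \<delta> - c *s \<gamma>"
  have bR: "\<beta> \<in> R" unfolding \<beta>_def c_def using reflR[OF Del_R[OF g] Del_R[OF d]] by (simp only: qrefl_def)
  show False
  proof (cases "\<beta> \<in> P")
    case True
    then obtain k where k: "\<forall>x\<in>Del. k x \<ge> 0" "\<beta> = (\<Sum>x\<in>Del. k x *s x)"
      using P_cone unfolding pcone_def by blast
    have "\<delta> - c *s \<gamma> = k \<delta> *s \<delta> + (\<Sum>x\<in>Del - {\<delta>}. k x *s x)"
      using k(2) sum.remove[OF finDel d, of "\<lambda>x. k x *s x"] unfolding \<beta>_def by simp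
    then have "(1 - k \<delta>) *s \<delta> = (\<Sum>x\<in>Del - {\<delta>}. k x *s x) + c *s \<gamma>"
      by (rule aux1)
    also have "\<dots> = (\<Sum>x\<in>Del - {\<delta>}. (k x + (if x = \<gamma> then c else 0)) *s x)"
      using sum_add_single[of "Del - {\<delta>}" \<gamma> k c] finDel g ne by simp
    finally show False
      using k(1) c g ne by (intro L_contra[OF d, of "\<lambda>x. k x + (if x = \<gamma> then c else 0)" \<gamma> "1 - k \<delta>"]) auto
  next
    case False
    then have "- \<beta> \<in> P" using R_cases[OF bR] by blast
    then obtain k where k: "\<forall>x\<in>Del. k x \<ge> 0" "- \<beta> = (\<Sum>x\<in>Del. k x *s x)"
      using P_cone unfolding pcone_def by blast
    have "c *s \<gamma> - \<delta> = k \<gamma> *s \<gamma> + (\<Sum>x\<in>Del - {\<gamma>}. k x *s x)"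
      using k(2) sum.remove[OF finDel g, of "\<lambda>x. k x *s x"] unfolding \<beta>_def by simp
    then have "(c - k \<gamma>) *s \<gamma> = (\<Sum>x\<in>Del - {\<gamma>}. k x *s x) + 1 *s \<delta>"
      by (rule aux2)
    also have "\<dots> = (\<Sum>x\<in>Del - {\<gamma>}. (k x + (if x = \<delta> then 1 else 0)) *s x)"
      using sum_add_single[of "Del - {\<gamma>}" \<delta> k 1] finDel d ne by simp
    finally show False
      using k(1) d ne by (intro L_contra[OF g, of "\<lambda>x. k x + (if x = \<delta> then 1 else 0)" \<delta> "c - k \<gamma>"]) auto
  qed
qed

end


lemma split_pos_neg:
  assumes "finite D"
  shows "(\<Sum>x\<in>D. c x *s x) = (\<Sum>x\<in>{x\<in>D. c x > 0}. c x *s x) - (\<Sum>x\<in>{x\<in>D. c x < 0}. (- c x) *s (x::rat^'n))"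
proof -
  have 1: "(\<Sum>x\<in>{x\<in>D. c x > 0}. c x *s x) = (\<Sum>x\<in>D. if c x > 0 then c x *s x else 0)"
    using assms by (rule sum.inter_filter)
  have 2: "(\<Sum>x\<in>{x\<in>D. c x < 0}. (- c x) *s x) = (\<Sum>x\<in>D. if c x < 0 then (- c x) *s x else 0)"
    using assms by (rule sum.inter_filter)
  have 3: "(\<Sum>x\<in>D. c x *s x) = (\<Sum>x\<in>D. (if c x > 0 then c x *s x else 0) - (if c x < 0 then (- c x) *s x else 0))"
  proof (rule sum.cong[OF HOL.refl])
    fix x
    show "c x *s x = (if c x > 0 then c x *s x else 0) - (if c x < 0 then (- c x) *s x else 0)"
      by (cases "c x > 0"; cases "c x < 0") (auto simp: vec_eq_iff)
  qed
  show ?thesis unfolding 1 2 3 by (simp add: sum_subtractf)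
qed

context posys begin

lemma bf_combo: "bf (\<Sum>x\<in>A. a x *s x) (\<Sum>y\<in>B. b y *s y) = (\<Sum>x\<in>A. \<Sum>y\<in>B. a x * b y * bf x y)"
  unfolding bf_sum_left bf_scale_left bf_sum_right bf_scale_right sum_distrib_left
  by (subst sum.swap[of _ B A]) (simp add: mult_ac)

lemma bf_combo_z: "bf (\<Sum>x\<in>A. a x *s x) z = (\<Sum>x\<in>A. a x * bf x z)"
  by (simp add: bf_sum_left bf_scale_left)

lemma nonneg_combo_zero:
  assumes A: "A \<subseteq> Del" and a: "\<forall>x\<in>A. a x \<ge> 0" and eq: "(\<Sum>x\<in>A. a x *s x) = 0"
  shows "\<forall>x\<in>A. a x = 0"
proof -
  have fA: "finite A" using finite_subset[OF A finDel] .
  have "bf (\<Sum>x\<in>A. a x *s x) z = (\<Sum>x\<in>A. a x * bf x z)" by (rule bf_combo_z)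
  then have s0: "(\<Sum>x\<in>A. a x * bf x z) = 0" unfolding eq by simp
  have nn: "\<forall>x\<in>A. a x * bf x z \<ge> 0"
  proof
    fix x assume "x \<in> A"
    then have "a x \<ge> 0" "bf x z > 0" using a A Del_pos by auto
    then show "a x * bf x z \<ge> 0" by simp
  qed
  have "\<forall>x\<in>A. a x * bf x z = 0"
    using sum_nonneg_eq_0_iff[OF fA, of "\<lambda>x. a x * bf x z"] nn s0 by simp
  then show ?thesis
  proof (intro ballI)
    fix x assume x: "x \<in> A" and h: "\<forall>x\<in>A. a x * bf x z = 0"
    have "bf x z > 0" using A Del_pos x by auto
    moreover have "a x * bf x z = 0" using h x by blast
    ultimately show "a x = 0" by simp
  qed
qed

lemma G:
  assumes A: "A \<subseteq> Del" and B: "B \<subseteq> Del" and AB: "A \<inter> B = {}"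
    and a: "\<forall>x\<in>A. a x \<ge> 0" and b: "\<forall>y\<in>B. b y \<ge> 0"
    and eq: "(\<Sum>x\<in>A. a x *s x) = (\<Sum>y\<in>B. b y *s y)"
  shows "(\<forall>x\<in>A. a x = 0) \<and> (\<forall>y\<in>B. b y = 0)"
proof -
  define u where "u = (\<Sum>x\<in>A. a x *s x)"
  have "bf u u = bf (\<Sum>x\<in>A. a x *s x) (\<Sum>y\<in>B. b y *s y)" unfolding u_def using eq by simp
  also have "\<dots> = (\<Sum>x\<in>A. \<Sum>y\<in>B. a x * b y * bf x y)" by (rule bf_combo)
  also have "\<dots> \<le> 0"
  proof (intro sum_nonpos)
    fix x y assume x: "x \<in> A" and y: "y \<in> B"
    have "x \<noteq> y" using x y AB by auto
    then have "bf x y \<le> 0" using obtuse x y A B by auto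
    moreover have "a x * b y \<ge> 0" using a b x y by simp
    ultimately show "a x * b y * bf x y \<le> 0" by (simp add: mult_nonneg_nonpos)
  qed
  finally have "u = 0" using bf_self_nonneg[of u] bf_self_eq_0[of u] by linarith
  then show ?thesis
    using nonneg_combo_zero[OF A a] nonneg_combo_zero[OF B b] eq unfolding u_def by simp
qed

lemma lin_indep: assumes eq: "(\<Sum>x\<in>Del. c x *s x) = 0" shows "\<forall>x\<in>Del. c x = 0"
proof -
  let ?Ip = "{x\<in>Del. c x > 0}" and ?In = "{x\<in>Del. c x < 0}"
  have "(\<Sum>x\<in>?Ip. c x *s x) = (\<Sum>x\<in>?In. (- c x) *s x)"
    using eq split_pos_neg[OF finDel, of c] by simp
  then have "(\<forall>x\<in>?Ip. c x = 0) \<and> (\<forall>y\<in>?In. - c y = 0)"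
    by (intro G) auto
  then show ?thesis by force
qed

lemma root_span: "\<alpha> \<in> R \<Longrightarrow> spanX Del \<alpha>"
proof -
  assume a: "\<alpha> \<in> R"
  have "spanX Del v" if "v \<in> P" for v
    using P_cone[OF that] unfolding pcone_def spanX_def by blast
  then show ?thesis using R_cases[OF a] spanX_neg[of Del "- \<alpha>"] by auto
qed

lemma Del_span: "spanX Del v"
proof -
  obtain d where v: "v = (\<Sum>\<alpha>\<in>R. d \<alpha> *s \<alpha>)" using spanR by blast
  show ?thesis unfolding v by (intro spanX_sum spanX_scale root_span)
qed

lemma orth_span:
  assumes orth: "\<forall>x\<in>I. \<forall>y\<in>J. bf x y = 0" and u: "spanX I u" and v: "spanX J v"
  shows "bf u v = 0"
proof -
  obtain a b where "u = (\<Sum>x\<in>I. a x *s x)" "v = (\<Sum>y\<in>J. b y *s y)" using u v unfolding spanX_def by blast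
  then show ?thesis using orth by (simp add: bf_combo)
qed

end


context posys begin

lemma decomp:
  assumes irr: "irreducible_rs R cor"
    and IJ: "I \<union> J = Del" "I \<inter> J = {}" and Ine: "I \<noteq> {}" and Jne: "J \<noteq> {}"
    and orth: "\<forall>x\<in>I. \<forall>y\<in>J. bf x y = 0"
  shows False
proof -
  have finI: "finite I" and finJ: "finite J" using IJ finDel by (auto intro: finite_subset)
  have orth': "\<forall>x\<in>J. \<forall>y\<in>I. bf x y = 0" using orth bf_commute by metis
  have claim: "spanX I \<alpha> \<or> spanX J \<alpha>" if "\<alpha> \<in> P" for \<alpha>
    using that
  proof (induction \<alpha> rule: measure_induct_rule[where f = "\<lambda>\<alpha>. card {\<beta>\<in>P. bf \<beta> z < bf \<alpha> z}"])
    case (less \<alpha>)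
    have aR: "\<alpha> \<in> R" using less.prems P_R by auto
    obtain k where k: "\<forall>x\<in>Del. k x \<ge> 0" "\<alpha> = (\<Sum>x\<in>Del. k x *s x)"
      using P_cone[OF less.prems] unfolding pcone_def by blast
    have "bf \<alpha> \<alpha> = bf (\<Sum>x\<in>Del. k x *s x) \<alpha>" using k(2) by (rule arg_cong[where f = "\<lambda>v. bf v \<alpha>"])
    also have "\<dots> = (\<Sum>x\<in>Del. k x * bf x \<alpha>)" by (simp add: bf_sum_left bf_scale_left)
    finally have aa: "bf \<alpha> \<alpha> = (\<Sum>x\<in>Del. k x * bf x \<alpha>)" .
    obtain \<gamma> where g: "\<gamma> \<in> Del" "k \<gamma> > 0" "bf \<gamma> \<alpha> > 0"
    proof (rule ccontr)
      assume "\<not> thesis"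
      then have "\<forall>x\<in>Del. \<not> (k x > 0 \<and> bf x \<alpha> > 0)" using that by blast
      then have "\<forall>x\<in>Del. k x * bf x \<alpha> \<le> 0" using k(1)
        by (metis less_eq_rat_def mult_nonneg_nonpos mult_zero_left not_less)
      then have "(\<Sum>x\<in>Del. k x * bf x \<alpha>) \<le> 0" by (simp add: sum_nonpos)
      then show False using aa bf_root_pos[OF aR] by simp
    qed
    have gR: "\<gamma> \<in> R" using Del_R[OF g(1)] .
    have spg: "spanX I \<gamma> \<or> spanX J \<gamma>" using g(1) IJ spanX_elem finI finJ by blast
    show ?case
    proof (cases "\<forall>x\<in>Del - {\<gamma>}. k x = 0")
      case True
      have "\<alpha> = k \<gamma> *s \<gamma> + (\<Sum>x\<in>Del - {\<gamma>}. k x *s x)"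
        using k(2) sum.remove[OF finDel g(1), of "\<lambda>x. k x *s x"] by simp
      also have "(\<Sum>x\<in>Del - {\<gamma>}. k x *s x) = 0" using True by simp
      finally have "\<alpha> = k \<gamma> *s \<gamma>" by simp
      then show ?thesis using spg spanX_scale by metis
    next
      case False
      then obtain \<delta> where d: "\<delta> \<in> Del" "\<delta> \<noteq> \<gamma>" "k \<delta> > 0" using k(1) by force
      define c where "c = qdot (cor \<gamma>) \<alpha>"
      have c: "c > 0" unfolding c_def using cor_sign_pos[OF gR] g(3) by simp
      define \<beta> where "\<beta> = \<alpha> - c *s \<gamma>"
      have bR: "\<beta> \<in> R" unfolding \<beta>_def c_def using reflR[OF gR aR] by (simp only: qrefl_def)
      have bP: "\<beta> \<in> P"
      proof (rule ccontr)
        assume "\<beta> \<notin> P"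
        then have "- \<beta> \<in> P" using R_cases[OF bR] by blast
        then obtain m where m: "\<forall>x\<in>Del. m x \<ge> 0" "- \<beta> = (\<Sum>x\<in>Del. m x *s x)"
          using P_cone unfolding pcone_def by blast
        have "(\<Sum>x\<in>Del. (k x + m x + (if x = \<gamma> then - c else 0)) *s x)
            = (\<Sum>x\<in>Del. (k x + m x) *s x) + (- c) *s \<gamma>"
          by (rule sum_add_single[OF finDel g(1)])
        also have "\<dots> = \<alpha> + (- \<beta>) + (- c) *s \<gamma>"
          by (simp only: k(2) m(2) vector_sadd_rdistrib sum.distrib)
        also have "\<dots> = 0" unfolding \<beta>_def by (simp add: vec_eq_iff)
        finally have "\<forall>x\<in>Del. k x + m x + (if x = \<gamma> then - c else 0) = 0" by (rule lin_indep)
        then have "k \<delta> + m \<delta> = 0" using d by auto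
        then show False using d m(1) by (metis add_pos_nonneg less_irrefl)
      qed
      have "bf \<beta> z = bf \<alpha> z - c * bf \<gamma> z" unfolding \<beta>_def by (simp add: bf_diff_left bf_scale_left)
      moreover have "c * bf \<gamma> z > 0" using c Del_pos[OF g(1)] by simp
      ultimately have lt: "bf \<beta> z < bf \<alpha> z" by simp
      have "card {\<beta>'\<in>P. bf \<beta>' z < bf \<beta> z} < card {\<beta>'\<in>P. bf \<beta>' z < bf \<alpha> z}"
      proof (rule psubset_card_mono)
        show "finite {\<beta>'\<in>P. bf \<beta>' z < bf \<alpha> z}" using finP by simp
        show "{\<beta>'\<in>P. bf \<beta>' z < bf \<beta> z} \<subset> {\<beta>'\<in>P. bf \<beta>' z < bf \<alpha> z}"
          using lt bP by auto
      qed
      then have ih: "spanX I \<beta> \<or> spanX J \<beta>" using less.IH bP by blast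
      have ab: "\<alpha> = \<beta> + c *s \<gamma>" unfolding \<beta>_def by simp
      have contra: "bf \<gamma> \<beta> = 0 \<Longrightarrow> False"
      proof -
        assume h: "bf \<gamma> \<beta> = 0"
        have "c * bf \<gamma> \<gamma> = 2 * bf \<gamma> \<alpha>" unfolding c_def by (rule cor_bf[OF gR])
        also have "\<dots> = 2 * (c * bf \<gamma> \<gamma>)" unfolding ab using h by (simp add: bf_add_right bf_scale_right)
        finally have "c * bf \<gamma> \<gamma> = 0" by simp
        then show False using c bf_root_pos[OF gR] by simp
      qed
      have gI: "\<gamma> \<in> I \<Longrightarrow> spanX I \<gamma>" and gJ: "\<gamma> \<in> J \<Longrightarrow> spanX J \<gamma>"
        using spanX_elem finI finJ by auto
      show ?thesis
      proof (cases "\<gamma> \<in> I")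
        case True
        show ?thesis
        proof (cases "spanX I \<beta>")
          case True
          then show ?thesis using ab gI[OF \<open>\<gamma> \<in> I\<close>] spanX_add spanX_scale by metis
        next
          case False
          then have "spanX J \<beta>" using ih by blast
          then have "bf \<gamma> \<beta> = 0" using orth_span[OF orth gI[OF \<open>\<gamma> \<in> I\<close>]] by blast
          then show ?thesis using contra by blast
        qed
      next
        case False
        then have gJJ: "\<gamma> \<in> J" using g(1) IJ by blast
        show ?thesis
        proof (cases "spanX J \<beta>")
          case True
          then show ?thesis using ab gJ[OF gJJ] spanX_add spanX_scale by metis
        next
          case False
          then have "spanX I \<beta>" using ih by blast
          then have "bf \<gamma> \<beta> = 0" using orth_span[OF orth' gJ[OF gJJ]] by blast
          then show ?thesis using contra by blast
        qed
      qed
    qed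
  qed
  have allR: "spanX I \<alpha> \<or> spanX J \<alpha>" if "\<alpha> \<in> R" for \<alpha>
  proof (cases "\<alpha> \<in> P")
    case True then show ?thesis using claim by blast
  next
    case False
    then have "- \<alpha> \<in> P" using R_cases[OF that] by blast
    then show ?thesis using claim spanX_neg[of _ "- \<alpha>"] by fastforce
  qed
  define R1 where "R1 = {\<alpha>\<in>R. spanX I \<alpha>}"
  define R2 where "R2 = R - R1"
  obtain \<gamma> where gam: "\<gamma> \<in> I" using Ine by blast
  obtain \<delta> where del: "\<delta> \<in> J" using Jne by blast
  have "\<gamma> \<in> R1" unfolding R1_def using gam IJ Del_R spanX_elem[OF finI gam] by blast
  moreover have "\<delta> \<in> R2"
  proof -
    have dR: "\<delta> \<in> R" using del IJ Del_R by blast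
    have "\<not> spanX I \<delta>"
    proof
      assume "spanX I \<delta>"
      then have "bf \<delta> \<delta> = 0" using orth_span[OF orth _ spanX_elem[OF finJ del]] by blast
      then show False using bf_root_pos[OF dR] by simp
    qed
    then show ?thesis unfolding R2_def R1_def using dR by blast
  qed
  moreover have "\<forall>\<alpha>\<in>R1. \<forall>\<beta>\<in>R2. qdot (cor \<alpha>) \<beta> = 0"
  proof (intro ballI)
    fix \<alpha> \<beta> assume a: "\<alpha> \<in> R1" and b: "\<beta> \<in> R2"
    have aR: "\<alpha> \<in> R" and sa: "spanX I \<alpha>" using a unfolding R1_def by auto
    have "spanX J \<beta>" using b allR unfolding R2_def R1_def by blast
    then have "bf \<alpha> \<beta> = 0" using orth_span[OF orth sa] by blast
    then have "qdot (cor \<alpha>) \<beta> * bf \<alpha> \<alpha> = 0" using cor_bf[OF aR, of \<beta>] by simp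
    then show "qdot (cor \<alpha>) \<beta> = 0" using bf_root_pos[OF aR] by simp
  qed
  moreover have "R1 \<union> R2 = R" "R1 \<inter> R2 = {}" unfolding R1_def R2_def by auto
  ultimately show False using irr unfolding irreducible_rs_def by blast
qed

end


context posys begin

lemma dominant_pos:
  assumes irr: "irreducible_rs R cor" and y: "y \<noteq> 0" and dom: "\<forall>\<gamma>\<in>Del. bf \<gamma> y \<ge> 0"
  shows "\<exists>c. y = (\<Sum>\<gamma>\<in>Del. c \<gamma> *s \<gamma>) \<and> (\<forall>\<gamma>\<in>Del. c \<gamma> > 0)"
proof -
  obtain c where yc: "y = (\<Sum>\<gamma>\<in>Del. c \<gamma> *s \<gamma>)" using Del_span unfolding spanX_def by blast
  define Ip where "Ip = {x\<in>Del. c x > 0}"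
  define In where "In = {x\<in>Del. c x < 0}"
  define u where "u = (\<Sum>x\<in>Ip. c x *s x)"
  define v where "v = (\<Sum>x\<in>In. (- c x) *s x)"
  have yuv: "y = u - v" unfolding yc u_def v_def Ip_def In_def by (rule split_pos_neg[OF finDel])
  have IpD: "Ip \<subseteq> Del" and InD: "In \<subseteq> Del" unfolding Ip_def In_def by auto
  have "bf u v = (\<Sum>x\<in>Ip. \<Sum>y\<in>In. c x * (- c y) * bf x y)" unfolding u_def v_def by (rule bf_combo)
  also have "\<dots> \<le> 0"
  proof (intro sum_nonpos)
    fix x y assume x: "x \<in> Ip" and yy: "y \<in> In"
    have "x \<noteq> y" using x yy unfolding Ip_def In_def by auto
    then have "bf x y \<le> 0" using obtuse x yy IpD InD by auto
    moreover have "c x * (- c y) \<ge> 0" using x yy unfolding Ip_def In_def by (simp add: mult_pos_neg less_imp_le)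
    ultimately show "c x * (- c y) * bf x y \<le> 0" by (rule mult_nonneg_nonpos[OF _ _, rotated])
  qed
  finally have uv: "bf u v \<le> 0" .
  have "bf y v = (\<Sum>x\<in>In. (- c x) * bf y x)" unfolding v_def by (simp add: bf_sum_right bf_scale_right bf_minus_right)
  also have "\<dots> \<ge> 0"
  proof (intro sum_nonneg)
    fix x assume x: "x \<in> In"
    have "bf y x \<ge> 0" using dom x InD bf_commute by (metis subsetD)
    moreover have "- c x \<ge> 0" using x unfolding In_def by simp
    ultimately show "(- c x) * bf y x \<ge> 0" by (rule mult_nonneg_nonneg[OF _ _, rotated])
  qed
  finally have yv: "bf y v \<ge> 0" .
  have "bf v v = bf u v - bf y v" unfolding yuv by (simp add: bf_diff_left)
  then have "bf v v \<le> 0" using uv yv by simp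
  then have v0: "v = 0" using bf_self_nonneg[of v] bf_self_eq_0[of v] by linarith
  have "\<forall>x\<in>In. - c x = 0"
    by (rule nonneg_combo_zero[OF InD]) (use v0 v_def In_def in auto)
  then have Inem: "In = {}" unfolding In_def by force
  then have cnn: "\<forall>x\<in>Del. c x \<ge> 0" unfolding In_def by force
  have yu: "y = u" using yuv v0 by simp
  show ?thesis
  proof (cases "\<forall>\<gamma>\<in>Del. c \<gamma> > 0")
    case True then show ?thesis using yc by blast
  next
    case False
    define J where "J = Del - Ip"
    have Jne: "J \<noteq> {}" using False unfolding J_def Ip_def by auto
    have Ine: "Ip \<noteq> {}" using y yu unfolding u_def by auto
    have orth: "\<forall>x\<in>Ip. \<forall>d\<in>J. bf x d = 0"
    proof (intro ballI)
      fix x d assume x: "x \<in> Ip" and d: "d \<in> J"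
      have dD: "d \<in> Del" and dn: "d \<notin> Ip" using d unfolding J_def by auto
      have "bf d y = (\<Sum>x\<in>Ip. c x * bf d x)" unfolding yu u_def by (simp add: bf_sum_right bf_scale_right)
      moreover have "bf d y \<ge> 0" using dom dD by simp
      moreover have np: "\<forall>x\<in>Ip. c x * bf d x \<le> 0"
      proof
        fix x assume x: "x \<in> Ip"
        have "bf d x \<le> 0" using obtuse[OF dD] x IpD dn by auto
        moreover have "c x > 0" using x unfolding Ip_def by simp
        ultimately show "c x * bf d x \<le> 0" by (intro mult_nonneg_nonpos) auto
      qed
      ultimately have "(\<Sum>x\<in>Ip. - (c x * bf d x)) = 0"
        using sum_nonpos[of Ip "\<lambda>x. c x * bf d x"] by (simp add: sum_negf)
      moreover have "finite Ip" using finite_subset[OF IpD finDel] .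
      ultimately have "\<forall>x\<in>Ip. - (c x * bf d x) = 0"
        using sum_nonneg_eq_0_iff[of Ip "\<lambda>x. - (c x * bf d x)"] np by simp
      then have "c x * bf d x = 0" using x by simp
      moreover have "c x > 0" using x unfolding Ip_def by simp
      ultimately show "bf x d = 0" by (simp add: bf_commute)
    qed
    have "Ip \<union> J = Del" "Ip \<inter> J = {}" unfolding J_def using IpD by auto
    then show ?thesis using decomp[OF irr _ _ Ine Jne orth] by blast
  qed
qed

lemma core:
  assumes irr: "irreducible_rs R cor" and l: "l \<noteq> 0" and lP: "\<forall>\<alpha>\<in>P. qdot l \<alpha> \<ge> 0"
    and y: "y \<noteq> 0" and yP: "\<forall>\<alpha>\<in>P. bf \<alpha> y \<ge> 0"
  shows "qdot l y > 0"
proof -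
  have "\<forall>\<gamma>\<in>Del. bf \<gamma> y \<ge> 0" using yP Del_P by auto
  then obtain c where yc: "y = (\<Sum>\<gamma>\<in>Del. c \<gamma> *s \<gamma>)" and cp: "\<forall>\<gamma>\<in>Del. c \<gamma> > 0"
    using dominant_pos[OF irr y] by blast
  have lD: "\<forall>\<gamma>\<in>Del. qdot l \<gamma> \<ge> 0" using lP Del_P by auto
  obtain \<gamma>0 where g0: "\<gamma>0 \<in> Del" "qdot l \<gamma>0 > 0"
  proof (rule ccontr)
    assume "\<not> thesis"
    then have z: "\<forall>\<gamma>\<in>Del. qdot l \<gamma> = 0" using that lD by force
    obtain d where "l = (\<Sum>\<gamma>\<in>Del. d \<gamma> *s \<gamma>)" using Del_span unfolding spanX_def by blast
    then have "qdot l l = (\<Sum>\<gamma>\<in>Del. d \<gamma> * qdot l \<gamma>)"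
      by (metis (no_types, lifting) qdot_scale_right qdot_sum_right sum.cong)
    also have "\<dots> = 0" using z by simp
    finally show False using l qdot_self_eq_0 by blast
  qed
  have "qdot l y = (\<Sum>\<gamma>\<in>Del. c \<gamma> * qdot l \<gamma>)" unfolding yc by (simp add: qdot_sum_right qdot_scale_right)
  also have "\<dots> > 0"
  proof (rule sum_pos2[OF finDel g0(1)])
    show "0 < c \<gamma>0 * qdot l \<gamma>0" using cp g0 by simp
    fix i assume "i \<in> Del"
    then have "c i > 0" "qdot l i \<ge> 0" using cp lD by auto
    then show "0 \<le> c i * qdot l i" by simp
  qed
  finally show ?thesis .
qed

end


lemma orth_exists:
  fixes X :: "(rat^'n) set"
  assumes fX: "finite X" and cX: "card X < CARD('n)"
  shows "\<exists>l::rat^'n. l \<noteq> 0 \<and> (\<forall>x\<in>X. qdot x l = 0)"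
proof -
  obtain g :: "rat^'n \<Rightarrow> 'n" where g: "inj_on g X"
    using card_le_inj[of X "UNIV :: 'n set"] fX cX by auto
  have "card (g ` X) < CARD('n)" using card_image[OF g] cX by simp
  then have "g ` X \<noteq> UNIV" by auto
  then obtain j where j: "j \<notin> g ` X" by blast
  define A :: "rat^'n^'n" where "A = (\<chi> i. if i \<in> g ` X then the_inv_into X g i else 0)"
  have "row j A = 0" unfolding A_def row_def using j by (simp add: vec_eq_iff)
  then have "det A = 0" by (rule det_zero_row(2))
  then have "\<not> inj ((*v) A)"
    using det_nz_iff_inj_gen[OF matrix_vector_mul_linear_gen[of A]] by simp
  then obtain u v where uv: "A *v u = A *v v" "u \<noteq> v" unfolding inj_def by blast
  have key: "(A *v w) $ (g x) = qdot x w" if "x \<in> X" for x w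
  proof -
    have "A $ (g x) = x" unfolding A_def using that the_inv_into_f_f[OF g that] by simp
    then show ?thesis unfolding matrix_vector_mult_def qdot_def by simp
  qed
  have "\<forall>x\<in>X. qdot x (u - v) = 0"
  proof
    fix x assume x: "x \<in> X"
    have "qdot x u = (A *v u) $ (g x)" using key[OF x] by simp
    also have "\<dots> = (A *v v) $ (g x)" using uv(1) by simp
    also have "\<dots> = qdot x v" using key[OF x] by simp
    finally show "qdot x (u - v) = 0" by (simp add: qdot_diff_right)
  qed
  moreover have "u - v \<noteq> 0" using uv(2) by simp
  ultimately show ?thesis by blast
qed

lemma qdot_close:
  assumes "\<forall>i. \<bar>y $ i - x $ i\<bar> < e"
  shows "\<bar>qdot f y - qdot f x\<bar> \<le> (\<Sum>i\<in>UNIV. \<bar>f $ i\<bar>) * e"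
proof -
  have "qdot f y - qdot f x = (\<Sum>i\<in>UNIV. f $ i * (y $ i - x $ i))"
    unfolding qdot_def by (simp add: sum_subtractf right_diff_distrib)
  then have "\<bar>qdot f y - qdot f x\<bar> \<le> (\<Sum>i\<in>UNIV. \<bar>f $ i * (y $ i - x $ i)\<bar>)"
    using sum_abs by metis
  also have "\<dots> \<le> (\<Sum>i\<in>UNIV. \<bar>f $ i\<bar> * e)"
  proof (rule sum_mono)
    fix i
    have "\<bar>y $ i - x $ i\<bar> \<le> e" using assms by (simp add: less_imp_le)
    then show "\<bar>f $ i * (y $ i - x $ i)\<bar> \<le> \<bar>f $ i\<bar> * e"
      by (simp add: abs_mult mult_left_mono)
  qed
  also have "\<dots> = (\<Sum>i\<in>UNIV. \<bar>f $ i\<bar>) * e" by (simp add: sum_distrib_right)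
  finally show ?thesis .
qed

context rsys begin

definition chamber_of :: "rat^'n \<Rightarrow> (rat^'n) set" where
  "chamber_of z = {y. \<forall>\<alpha>\<in>R. qdot (cor \<alpha>) y * qdot (cor \<alpha>) z > 0}"

lemma chamber_wc: "\<forall>\<alpha>\<in>R. bf \<alpha> z \<noteq> 0 \<Longrightarrow> weyl_chamber R cor (chamber_of z)"
  unfolding weyl_chamber_def chamber_of_def using cor_zero by blast

lemma sub_closure: "C \<subseteq> qclosure C"
  unfolding qclosure_def by force

lemma zero_closure:
  assumes reg: "\<forall>\<alpha>\<in>R. bf \<alpha> z \<noteq> 0"
  shows "0 \<in> qclosure (chamber_of z)"
  unfolding qclosure_def
proof (intro CollectI allI impI)
  fix e :: rat assume e: "e > 0"
  define M where "M = (\<Sum>i\<in>UNIV. \<bar>z $ i\<bar>)"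
  have M: "M \<ge> 0" unfolding M_def by (simp add: sum_nonneg)
  define t where "t = e / (M + 1)"
  have t: "t > 0" unfolding t_def using e M by simp
  have "t *s z \<in> chamber_of z"
    unfolding chamber_of_def
  proof (intro CollectI ballI)
    fix \<alpha> assume a: "\<alpha> \<in> R"
    have "qdot (cor \<alpha>) z \<noteq> 0" using reg a cor_zero by blast
    then show "qdot (cor \<alpha>) (t *s z) * qdot (cor \<alpha>) z > 0"
    proof -
      have "qdot (cor \<alpha>) z * qdot (cor \<alpha>) z > 0" using \<open>qdot (cor \<alpha>) z \<noteq> 0\<close> by (auto simp: zero_less_mult_iff linorder_neq_iff)
      then show ?thesis using t by (simp add: qdot_scale_right mult.assoc)
    qed
  qed
  moreover have "\<forall>i. \<bar>0 $ i - (t *s z) $ i\<bar> < e"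
  proof
    fix i
    have zi: "\<bar>z $ i\<bar> \<le> M" unfolding M_def by (rule member_le_sum) auto
    have "\<bar>0 $ i - (t *s z) $ i\<bar> = t * \<bar>z $ i\<bar>" using t by (simp add: abs_mult)
    also have "\<dots> \<le> t * M" using zi t by (simp add: mult_left_mono)
    also have "\<dots> < e" unfolding t_def using e M by (simp add: field_simps)
    finally show "\<bar>0 $ i - (t *s z) $ i\<bar> < e" .
  qed
  ultimately show "\<exists>x\<in>chamber_of z. \<forall>i. \<bar>0 $ i - x $ i\<bar> < e" by blast
qed

lemma closure_sign:
  assumes y: "y \<in> qclosure (chamber_of z)" and a: "\<alpha> \<in> R"
  shows "qdot (cor \<alpha>) y * qdot (cor \<alpha>) z \<ge> 0"
proof (rule ccontr)
  assume "\<not> ?thesis"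
  then have neg: "qdot (cor \<alpha>) y * qdot (cor \<alpha>) z < 0" by simp
  define fy where "fy = qdot (cor \<alpha>) y"
  define fz where "fz = qdot (cor \<alpha>) z"
  have neg': "fy * fz < 0" using neg unfolding fy_def fz_def .
  then have fy0: "fy \<noteq> 0" by auto
  define S where "S = (\<Sum>i\<in>UNIV. \<bar>cor \<alpha> $ i\<bar>)"
  have S: "S \<ge> 0" unfolding S_def by (simp add: sum_nonneg)
  define e where "e = \<bar>fy\<bar> / (S + 1)"
  have e: "e > 0" unfolding e_def using fy0 S by simp
  obtain x where x: "x \<in> chamber_of z" "\<forall>i. \<bar>y $ i - x $ i\<bar> < e"
    using y e unfolding qclosure_def by blast
  define fx where "fx = qdot (cor \<alpha>) x"
  have "\<bar>fy - fx\<bar> \<le> S * e" unfolding fy_def fx_def S_def by (rule qdot_close[OF x(2)])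
  also have "S * e < \<bar>fy\<bar>" unfolding e_def using fy0 S by (simp add: field_simps)
  finally have close: "\<bar>fy - fx\<bar> < \<bar>fy\<bar>" .
  have pos: "fx * fz > 0" using x(1) a unfolding chamber_of_def fx_def fz_def by blast
  show False
  proof (cases "fy > 0")
    case True
    then have "fx > 0" using close by (simp add: abs_if split: if_split_asm)
    moreover have "fz < 0" using True neg' by (simp add: mult_less_0_iff)
    ultimately show False using pos by (simp add: zero_less_mult_iff)
  next
    case False
    then have fyn: "fy < 0" using fy0 by simp
    then have "fx < 0" using close by (simp add: abs_if split: if_split_asm)
    moreover have "fz > 0" using fyn neg' by (simp add: mult_less_0_iff)
    ultimately show False using pos by (simp add: zero_less_mult_iff)
  qed
qed

end


context rsys begin

lemma W_regular:
  assumes w: "w \<in> W" and reg: "\<forall>\<alpha>\<in>R. bf \<alpha> x0 \<noteq> 0"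
  shows "\<forall>\<alpha>\<in>R. bf \<alpha> (w x0) \<noteq> 0"
proof
  fix \<alpha> assume "\<alpha> \<in> R"
  then obtain \<beta> where b: "\<beta> \<in> R" "\<alpha> = w \<beta>" using W_perm[OF w] by blast
  then show "bf \<alpha> (w x0) \<noteq> 0" using bf_inv[OF w] reg by simp
qed

lemma separate:
  assumes irr: "irreducible_rs R cor" and reg: "\<forall>\<alpha>\<in>R. bf \<alpha> x0 \<noteq> 0" and l: "l \<noteq> 0"
  shows "\<exists>w\<in>W. qclosure (chamber_of (w x0)) \<subseteq> lplus l \<and> qclosure (chamber_of (w x0)) \<inter> lzero l = {0}"
proof -
  let ?F = "(\<lambda>w. qdot l (w x0)) ` W"
  have fF: "finite ?F" using W_finite by simp
  have neF: "?F \<noteq> {}" using weyl_group.id by blast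
  obtain w where w: "w \<in> W" "qdot l (w x0) = Max ?F" using Max_in[OF fF neF] by auto
  have wmax: "qdot l (w' x0) \<le> qdot l (w x0)" if "w' \<in> W" for w'
    using Max_ge[OF fF] that w(2) by auto
  define z where "z = w x0"
  have regz: "\<forall>\<alpha>\<in>R. bf \<alpha> z \<noteq> 0" unfolding z_def by (rule W_regular[OF w(1) reg])
  interpret pz: posys R cor z by unfold_locales (rule regz)
  have lP: "\<forall>\<alpha>\<in>pz.P. qdot l \<alpha> \<ge> 0"
  proof
    fix \<alpha> assume "\<alpha> \<in> pz.P"
    then have a: "\<alpha> \<in> R" "bf \<alpha> z > 0" unfolding pz.P_def by auto
    define c where "c = qdot (cor \<alpha>) z"
    have c: "c > 0" unfolding c_def using cor_sign_pos[OF a(1)] a(2) by simp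
    have "qrefl cor \<alpha> \<circ> w \<in> W" by (rule weyl_group.refl[OF w(1) a(1)])
    then have "qdot l ((qrefl cor \<alpha> \<circ> w) x0) \<le> qdot l z" unfolding z_def by (rule wmax)
    then have "qdot l (z - c *s \<alpha>) \<le> qdot l z" unfolding c_def z_def qrefl_def by simp
    then have "c * qdot l \<alpha> \<ge> 0" by (simp add: qdot_diff_right qdot_scale_right)
    then show "qdot l \<alpha> \<ge> 0" using c by (simp add: zero_le_mult_iff)
  qed
  have pos: "qdot l y > 0" if y: "y \<in> qclosure (chamber_of z)" "y \<noteq> 0" for y
  proof (rule pz.core[OF irr l lP y(2)])
    show "\<forall>\<alpha>\<in>pz.P. bf \<alpha> y \<ge> 0"
    proof
      fix \<alpha> assume "\<alpha> \<in> pz.P"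
      then have a: "\<alpha> \<in> R" "bf \<alpha> z > 0" unfolding pz.P_def by auto
      have "qdot (cor \<alpha>) z > 0" using cor_sign_pos[OF a(1)] a(2) by simp
      moreover have "qdot (cor \<alpha>) y * qdot (cor \<alpha>) z \<ge> 0" by (rule closure_sign[OF y(1) a(1)])
      ultimately have "qdot (cor \<alpha>) y \<ge> 0" by (simp add: zero_le_mult_iff)
      then show "bf \<alpha> y \<ge> 0" using cor_sign_nonneg[OF a(1)] by simp
    qed
  qed
  have "qclosure (chamber_of z) \<subseteq> lplus l"
  proof
    fix y assume y: "y \<in> qclosure (chamber_of z)"
    show "y \<in> lplus l" unfolding lplus_def using pos[OF y] by (cases "y = 0") (auto simp: less_imp_le)
  qed
  moreover have "qclosure (chamber_of z) \<inter> lzero l = {0}"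
  proof
    show "qclosure (chamber_of z) \<inter> lzero l \<subseteq> {0}" unfolding lzero_def using pos by fastforce
    show "{0} \<subseteq> qclosure (chamber_of z) \<inter> lzero l" unfolding lzero_def using zero_closure[OF regz] by simp
  qed
  ultimately show ?thesis using w(1) unfolding z_def by blast
qed

lemma chamber_point:
  assumes Rne: "R \<noteq> {}" and C: "weyl_chamber R cor C"
  shows "\<exists>p. p \<in> qclosure C \<and> p \<noteq> 0"
proof -
  obtain x where x: "\<forall>\<alpha>\<in>R. qdot (cor \<alpha>) x \<noteq> 0" "C = {y. \<forall>\<alpha>\<in>R. qdot (cor \<alpha>) y * qdot (cor \<alpha>) x > 0}"
    using C unfolding weyl_chamber_def by blast
  have "x \<in> C" using x by (auto simp: zero_less_mult_iff linorder_neq_iff)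
  moreover have "x \<noteq> 0" using x(1) Rne by auto
  ultimately show ?thesis using sub_closure by blast
qed

lemma lower:
  assumes Rne: "R \<noteq> {}" and S: "separating_seq R cor Cs"
  shows "length Cs > CARD('n)"
proof (rule ccontr)
  assume "\<not> ?thesis"
  then have len: "length Cs \<le> CARD('n)" by simp
  have ch: "\<forall>C\<in>set Cs. weyl_chamber R cor C" and sepl:
    "\<forall>l. l \<noteq> 0 \<longrightarrow> (\<exists>C\<in>set Cs. qclosure C \<subseteq> lplus l \<and> qclosure C \<inter> lzero l = {0})"
    using S unfolding separating_seq_def by auto
  define pt :: "(rat^'n) set \<Rightarrow> rat^'n" where "pt C = (SOME p. p \<in> qclosure C \<and> p \<noteq> 0)" for C
  have pt: "pt C \<in> qclosure C" "pt C \<noteq> 0" if "C \<in> set Cs" for C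
    using someI_ex[OF chamber_point[OF Rne ch[rule_format, OF that]]] unfolding pt_def by auto
  show False
  proof (cases Cs)
    case Nil
    have "((\<chi> i. 1) :: rat^'n) \<noteq> 0" by (simp add: vec_eq_iff)
    then show False using sepl Nil by auto
  next
    case (Cons C0 Cs')
    define X where "X = pt ` (set Cs - {C0})"
    have "card X \<le> card (set Cs - {C0})" unfolding X_def by (rule card_image_le) simp
    also have "\<dots> = card (set Cs) - 1" by (rule card_Diff_singleton) (use Cons in auto)
    also have "\<dots> \<le> length Cs - 1" using card_length[of Cs] by simp
    also have "\<dots> < CARD('n)" using len Cons by simp
    finally have cX: "card X < CARD('n)" .
    obtain l0 where l0: "l0 \<noteq> 0" "\<forall>x\<in>X. qdot x l0 = 0"
      using orth_exists[OF _ cX] unfolding X_def by auto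
    define l where "l = (if qdot l0 (pt C0) > 0 then - l0 else l0)"
    have l: "l \<noteq> 0" unfolding l_def using l0 by simp
    have lX: "\<forall>x\<in>X. qdot l x = 0" unfolding l_def using l0(2)
      by (simp add: qdot_minus_left qdot_minus_right qdot_commute[of l0])
    have lp: "qdot l (pt C0) \<le> 0" unfolding l_def by (simp add: qdot_minus_left)
    obtain C where C: "C \<in> set Cs" "qclosure C \<subseteq> lplus l" "qclosure C \<inter> lzero l = {0}"
      using sepl l by blast
    show False
    proof (cases "C = C0")
      case True
      have p: "pt C0 \<in> qclosure C0" "pt C0 \<noteq> 0" using pt Cons by auto
      show False
      proof (cases "qdot l (pt C0) = 0")
        case True
        then have "pt C0 \<in> qclosure C \<inter> lzero l" using p \<open>C = C0\<close> unfolding lzero_def by simp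
        then show False using C(3) p(2) by blast
      next
        case False
        then have "pt C0 \<notin> lplus l" using lp unfolding lplus_def by simp
        then show False using C(2) p(1) \<open>C = C0\<close> by blast
      qed
    next
      case False
      then have "pt C \<in> X" unfolding X_def using C(1) by blast
      then have "pt C \<in> qclosure C \<inter> lzero l" using lX pt[OF C(1)] unfolding lzero_def by simp
      then show False using C(3) pt[OF C(1)] by blast
    qed
  qed
qed

end

theorem lemma5:
  fixes R :: "(rat ^ 'n) set" and cor :: "rat ^ 'n \<Rightarrow> rat ^ 'n"
  assumes "root_system R cor" and "irreducible_rs R cor"
  shows "CARD('n) + 1 \<le> sep R cor \<and> sep R cor \<le> card (weyl_group R cor)"
proof -
  interpret rsys R cor by unfold_locales (rule assms(1))
  have Rne: "R \<noteq> {}" using assms(2) unfolding irreducible_rs_def by blast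
  obtain x0 where reg: "\<forall>\<alpha>\<in>R. bf \<alpha> x0 \<noteq> 0" using ex_regular by blast
  obtain ws where ws: "set ws = W" "distinct ws" using finite_distinct_list[OF W_finite] by blast
  define Cs where "Cs = map (\<lambda>w. chamber_of (w x0)) ws"
  have lenCs: "length Cs = card W" unfolding Cs_def using ws distinct_card by fastforce
  have sepCs: "separating_seq R cor Cs"
    unfolding separating_seq_def
  proof (intro conjI allI impI ballI)
    fix C assume "C \<in> set Cs"
    then obtain w where "w \<in> W" "C = chamber_of (w x0)" unfolding Cs_def using ws by auto
    then show "weyl_chamber R cor C" using chamber_wc W_regular reg by blast
  next
    fix l :: "rat^'n" assume "l \<noteq> 0"
    then obtain w where "w \<in> W" "qclosure (chamber_of (w x0)) \<subseteq> lplus l"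
      "qclosure (chamber_of (w x0)) \<inter> lzero l = {0}"
      using separate[OF assms(2) reg] by blast
    moreover have "chamber_of (w x0) \<in> set Cs" using \<open>w \<in> W\<close> ws unfolding Cs_def by auto
    ultimately show "\<exists>C\<in>set Cs. qclosure C \<subseteq> lplus l \<and> qclosure C \<inter> lzero l = {0}" by blast
  qed
  have ex: "\<exists>Cs. length Cs = card W \<and> separating_seq R cor Cs" using lenCs sepCs by blast
  have ub: "sep R cor \<le> card W" unfolding sep_def by (rule Least_le) (rule ex)
  have "\<exists>Cs. length Cs = sep R cor \<and> separating_seq R cor Cs"
    unfolding sep_def by (rule LeastI_ex) (use ex in blast)
  then obtain Cs0 where "length Cs0 = sep R cor" "separating_seq R cor Cs0" by blast
  then have "CARD('n) < sep R cor" using lower[OF Rne] by metis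
  then show ?thesis using ub by simp
qed


end
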